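(* Let $\tilde K_h$ be any $q\times p$ matrix with entries in $\overline{\mathbb{R}}$. For $t\in\bar\tau_\delta=\{0,\delta,\dots,T\}$ let $v^t$ be the value function at time $t$ and $v_h^t$ its approximation given by the effective max-plus finite element method in which $K_h$ is approximated by $\tilde K_h$. Then \[ \|v_h^T-v^T\|_\infty\leq\Big(1+\frac T\delta\Big)\Big(\sup_{t\in\bar\tau_\delta}\big(\|P^{-\mathcal Z_h}(v^t)-v^t\|_\infty+\|P_{\mathcal W_h}(v^t)-v^t\|_\infty\big)+\|\tilde K_h-K_h\|_\infty\Big). \]
   Context: Optimal control setting: $X\subseteq\mathbb{R}^n$, $U\subseteq\mathbb{R}^m$, $\ell:X\times U\to\mathbb R$, $f:X\times U\to\mathbb{R}^n$, $T>0$, $\phi:X\to\mathbb{R}\cup\{-\infty\}$. For $t\ge0$ and $g:X\to\overline{\mathbb R}$, $S^tg(x)=\sup\{\int_0^t\ell(\mathbf x(s),\mathbf u(s))ds+g(\mathbf x(t))\}$ over measurable $\mathbf u:[0,t]\to U$ and absolutely continuous $\mathbf x:[0,t]\to X$ with $\dot{\mathbf x}=f(\mathbf x,\mathbf u)$ a.e. and $\mathbf x(0)=x$; value function $v^t=S^t\phi$. Arithmetic in $\overline{\mathbb R}=\mathbb{R}\cup\{\pm\infty\}$ with $-\infty$ absorbing for $+$; $a\backslash b=\max\{\lambda\in\overline{\mathbb{R}}:a+\lambda\leq b\}$. $\langle u,v\rangle=\sup_{x\in X}(u(x)+v(x))$. Finite elements $w_1,\dots,w_p$ and test functions $z_1,\dots,z_q$,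 functions $X\to\mathbb{R}\cup\{-\infty\}$. $W_h\lambda=\sup_i(w_i+\lambda_i)$; $(W_h\backslash g)_i=\inf_{x\in X}(w_i(x)\backslash g(x))$; $P_{\mathcal W_h}g=W_h(W_h\backslash g)$; $P^{-\mathcal Z_h}g(x)=\min_j\big(z_j(x)\backslash\langle z_j,g\rangle\big)$. For a matrix $A$: $(A\lambda)_j=\max_k(A_{jk}+\lambda_k)$, $(A\backslash\mu)_i=\min_jA_{ji}\backslash\mu_j$. Let $N\geq1$, $\delta=T/N$, $(M_h)_{ji}=\langle z_j,w_i\rangle$, $(K_h)_{ji}=\langle z_j,S^\delta w_i\rangle$. Effective method with $\tilde K_h$: $\lambda^0=W_h\backslash\phi$, $\lambda^{t+\delta}=M_h\backslash(\tilde K_h\lambda^t)$ for $t=0,\dots,T-\delta$, $v_h^t=W_h\lambda^t$. For $u,v:X\to\overline{\mathbb R}$, $\|u-v\|_\infty=\inf\{\lambda\geq0: v-\lambda\leq u\leq v+\lambda\}$ (equal to $\sup_x|u(x)-v(x)|$ when $u-v$ is finite-valued); for matrices, $\|A-B\|_\infty$ is defined in the same way entrywise (i.e. $\max_{j,i}|A_{ji}-B_{ji}|$ for finite entries). *)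

theory Defs
  imports "HOL-Analysis.Analysis" "HOL-Library.Extended_Real"
begin

text \<open>Addition in the extended reals with -infinity absorbing (so -inf + inf = -inf).\<close>
definition madd :: "ereal \<Rightarrow> ereal \<Rightarrow> ereal" where
  "madd a b = (if a = -\<infinity> \<or> b = -\<infinity> then -\<infinity> else a + b)"

definition resid :: "ereal \<Rightarrow> ereal \<Rightarrow> ereal" where
  "resid a b = (GREATEST lam. madd a lam \<le> b)"

definition pairing :: "'a set \<Rightarrow> ('a \<Rightarrow> ereal) \<Rightarrow> ('a \<Rightarrow> ereal) \<Rightarrow> ereal" where
  "pairing X u v = (SUP x\<in>X. madd (u x) (v x))"

definition supdist :: "'a set \<Rightarrow> ('a \<Rightarrow> ereal) \<Rightarrow> ('a \<Rightarrow> ereal) \<Rightarrow> ereal" where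
  "supdist X u v = Inf {lam::ereal. 0 \<le> lam \<and>
      (\<forall>x\<in>X. madd (v x) (-lam) \<le> u x \<and> u x \<le> madd (v x) lam)}"

definition matdist :: "nat \<Rightarrow> nat \<Rightarrow> (nat \<Rightarrow> nat \<Rightarrow> ereal) \<Rightarrow> (nat \<Rightarrow> nat \<Rightarrow> ereal) \<Rightarrow> ereal" where
  "matdist q p A B = Inf {lam::ereal. 0 \<le> lam \<and>
      (\<forall>j<q. \<forall>i<p. madd (B j i) (-lam) \<le> A j i \<and> A j i \<le> madd (B j i) lam)}"

definition mp_mult :: "nat \<Rightarrow> (nat \<Rightarrow> nat \<Rightarrow> ereal) \<Rightarrow> (nat \<Rightarrow> ereal) \<Rightarrow> nat \<Rightarrow> ereal" where
  "mp_mult p A lam j = (SUP k\<in>{..<p}. madd (A j k) (lam k))"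

definition mp_resid :: "nat \<Rightarrow> (nat \<Rightarrow> nat \<Rightarrow> ereal) \<Rightarrow> (nat \<Rightarrow> ereal) \<Rightarrow> nat \<Rightarrow> ereal" where
  "mp_resid q A \<mu> i = (INF j\<in>{..<q}. resid (A j i) (\<mu> j))"

definition Wop :: "nat \<Rightarrow> (nat \<Rightarrow> 'a \<Rightarrow> ereal) \<Rightarrow> (nat \<Rightarrow> ereal) \<Rightarrow> 'a \<Rightarrow> ereal" where
  "Wop p w lam x = (SUP i\<in>{..<p}. madd (w i x) (lam i))"

definition Wres :: "'a set \<Rightarrow> (nat \<Rightarrow> 'a \<Rightarrow> ereal) \<Rightarrow> ('a \<Rightarrow> ereal) \<Rightarrow> nat \<Rightarrow> ereal" where
  "Wres X w g i = (INF x\<in>X. resid (w i x) (g x))"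

definition PW :: "'a set \<Rightarrow> nat \<Rightarrow> (nat \<Rightarrow> 'a \<Rightarrow> ereal) \<Rightarrow> ('a \<Rightarrow> ereal) \<Rightarrow> 'a \<Rightarrow> ereal" where
  "PW X p w g = Wop p w (Wres X w g)"

definition PZ :: "'a set \<Rightarrow> nat \<Rightarrow> (nat \<Rightarrow> 'a \<Rightarrow> ereal) \<Rightarrow> ('a \<Rightarrow> ereal) \<Rightarrow> 'a \<Rightarrow> ereal" where
  "PZ X q z g x = (INF j\<in>{..<q}. resid (z j x) (pairing X (z j) g))"

definition abs_cont_on :: "real \<Rightarrow> real \<Rightarrow> (real \<Rightarrow> 'b::real_normed_vector) \<Rightarrow> bool" where
  "abs_cont_on a b g \<longleftrightarrow>
     (\<forall>e>0. \<exists>d>0. \<forall>(n::nat) (c::nat \<Rightarrow> real) (c'::nat \<Rightarrow> real).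
        (\<forall>k<n. a \<le> c k \<and> c k \<le> c' k \<and> c' k \<le> b) \<and>
        (\<forall>k<n. \<forall>l<n. k \<noteq> l \<longrightarrow> c' k \<le> c l \<or> c' l \<le> c k) \<and>
        (\<Sum>k<n. c' k - c k) < d
        \<longrightarrow> (\<Sum>k<n. norm (g (c' k) - g (c k))) < e)"

text \<open>Admissible pairs (control, trajectory) on [0,t] starting at x0: u measurable with values
  in U, traj absolutely continuous with values in X, traj' = f(traj,u) a.e., traj 0 = x0,
  and the running payoff integrable on [0,t] (so that the integral makes sense).\<close>
definition admissible ::
  "('x::euclidean_space) set \<Rightarrow> ('u::euclidean_space) set \<Rightarrow> ('x \<Rightarrow> 'u \<Rightarrow> 'x) \<Rightarrow> ('x \<Rightarrow> 'u \<Rightarrow> real)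
    \<Rightarrow> real \<Rightarrow> 'x \<Rightarrow> (real \<Rightarrow> 'u) \<Rightarrow> (real \<Rightarrow> 'x) \<Rightarrow> bool" where
  "admissible X U f L t x0 u traj \<longleftrightarrow>
     u \<in> borel_measurable (lebesgue_on {0..t}) \<and>
     (\<forall>s\<in>{0..t}. u s \<in> U) \<and>
     (\<forall>s\<in>{0..t}. traj s \<in> X) \<and>
     abs_cont_on 0 t traj \<and>
     (AE s in lebesgue_on {0..t}. (traj has_vector_derivative f (traj s) (u s)) (at s within {0..t})) \<and>
     traj 0 = x0 \<and>
     integrable (lebesgue_on {0..t}) (\<lambda>s. L (traj s) (u s))"

definition Sgrp ::
  "('x::euclidean_space) set \<Rightarrow> ('u::euclidean_space) set \<Rightarrow> ('x \<Rightarrow> 'u \<Rightarrow> 'x) \<Rightarrow> ('x \<Rightarrow> 'u \<Rightarrow> real)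
    \<Rightarrow> real \<Rightarrow> ('x \<Rightarrow> ereal) \<Rightarrow> 'x \<Rightarrow> ereal" where
  "Sgrp X U f L t g x0 =
     (SUP (u, traj)\<in>{(u, traj). admissible X U f L t x0 u traj}.
        madd (ereal (integral\<^sup>L (lebesgue_on {0..t}) (\<lambda>s. L (traj s) (u s)))) (g (traj t)))"

primrec fem_coeffs ::
  "'a set \<Rightarrow> nat \<Rightarrow> nat \<Rightarrow> (nat \<Rightarrow> 'a \<Rightarrow> ereal) \<Rightarrow> (nat \<Rightarrow> 'a \<Rightarrow> ereal) \<Rightarrow> (nat \<Rightarrow> nat \<Rightarrow> ereal)
    \<Rightarrow> ('a \<Rightarrow> ereal) \<Rightarrow> nat \<Rightarrow> nat \<Rightarrow> ereal" where
  "fem_coeffs X p q w z Kt \<phi> 0 = Wres X w \<phi>"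
| "fem_coeffs X p q w z Kt \<phi> (Suc k) =
     mp_resid q (\<lambda>j i. pairing X (z j) (w i)) (mp_mult p Kt (fem_coeffs X p q w z Kt \<phi> k))"

end

theory Submission
  imports Defs
begin

lemma eq_by_lower: "(\<And>l::'b::order. l \<le> x \<longleftrightarrow> l \<le> y) \<Longrightarrow> x = y"
  by (metis order.antisym order.refl)

lemma eq_by_upper: "(\<And>l::'b::order. x \<le> l \<longleftrightarrow> y \<le> l) \<Longrightarrow> x = y"
  by (metis order.antisym order.refl)

lemma E1: "(l::ereal) \<le> x + ereal c \<longleftrightarrow> l + ereal (-c) \<le> x"
  by (cases l; cases x) (auto simp: algebra_simps)

lemma E2: "(x::ereal) + ereal c \<le> l \<longleftrightarrow> x \<le> l + ereal (-c)"
  by (cases l; cases x) (auto simp: algebra_simps)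

lemma E3: "(x::ereal) + ereal c + ereal (-c) = x"
  by (cases x) auto

lemma INF_add_const: "(INF i\<in>I. f i + ereal c) = (INF i\<in>I. f i) + ereal c"
  by (rule eq_by_lower) (simp add: E1 le_INF_iff)

lemma SUP_add_const: "(SUP i\<in>I. f i + ereal c) = (SUP i\<in>I. f i) + ereal c"
  by (rule eq_by_upper) (simp add: E2 SUP_le_iff)

lemma madd_ereal: "madd a (ereal c) = a + ereal c"
  by (cases a) (auto simp: madd_def)

lemma madd_comm: "madd a b = madd b a"
  by (auto simp: madd_def add.commute)

lemma madd_assoc: "madd a (madd b c) = madd (madd a b) c"
  by (cases a; cases b; cases c) (auto simp: madd_def)

lemma madd_mono2: "b \<le> c \<Longrightarrow> madd a b \<le> madd a c"
  by (cases a; cases b; cases c) (auto simp: madd_def)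

lemma madd_mono1: "a \<le> b \<Longrightarrow> madd a c \<le> madd b c"
  using madd_mono2 madd_comm by metis

lemma madd_shift: "madd a (b + ereal c) = madd a b + ereal c"
  by (cases a; cases b) (auto simp: madd_def)

lemma madd_shift1: "madd (b + ereal c) a = madd b a + ereal c"
  using madd_shift madd_comm by metis

lemma madd_Sup: "madd a (Sup S) = (SUP l\<in>S. madd a l)"
proof (cases a)
  case (real r)
  then have m: "madd a l = ereal r + l" for l by (cases l) (auto simp: madd_def)
  show ?thesis
  proof (cases "S = {}")
    case True then show ?thesis by (simp add: real madd_def bot_ereal_def)
  next
    case False
    then show ?thesis unfolding m using SUP_ereal_add_right[of S "ereal r" "\<lambda>x. x"] by simp
  qed
next
  case PInf
  show ?thesis
  proof (cases "Sup S = -\<infinity>")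
    case True
    then have "S \<subseteq> {-\<infinity>}" using Sup_eq_MInfty[of S] by auto
    then have "(SUP l\<in>S. madd a l) \<le> -\<infinity>" using PInf by (intro SUP_least) (auto simp: madd_def)
    then show ?thesis using True PInf by (simp add: madd_def)
  next
    case False
    then obtain l where "l \<in> S" "l \<noteq> -\<infinity>" by (auto simp: Sup_eq_MInfty)
    then have "madd a l = \<infinity>" using PInf by (auto simp: madd_def)
    then have "(SUP l\<in>S. madd a l) = \<infinity>" using \<open>l \<in> S\<close>
      by (metis SUP_upper top_ereal_def top_le)
    then show ?thesis using False PInf by (simp add: madd_def)
  qed
next
  case MInf
  then have "(SUP l\<in>S. madd a l) \<le> -\<infinity>" by (intro SUP_least) (auto simp: madd_def)
  then show ?thesis using MInf by (simp add: madd_def)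
qed

lemma madd_SUP: "madd a (SUP i\<in>I. f i) = (SUP i\<in>I. madd a (f i))"
  using madd_Sup[of a "f ` I"] by (simp add: image_comp)

lemma madd_SUP1: "madd (SUP i\<in>I. f i) a = (SUP i\<in>I. madd (f i) a)"
proof -
  have "madd (SUP i\<in>I. f i) a = madd a (SUP i\<in>I. f i)" by (rule madd_comm)
  also have "\<dots> = (SUP i\<in>I. madd a (f i))" by (rule madd_SUP)
  also have "\<dots> = (SUP i\<in>I. madd (f i) a)" by (rule SUP_cong) (auto intro: madd_comm)
  finally show ?thesis .
qed

lemma resid_galois: "madd a l \<le> b \<longleftrightarrow> l \<le> resid a b"
proof -
  define S where "S = {l. madd a l \<le> b}"
  have "madd a (Sup S) \<le> b" unfolding madd_Sup S_def by (auto intro: SUP_least)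
  then have g: "resid a b = Sup S" unfolding resid_def
    by (intro Greatest_equality) (auto simp: S_def intro: Sup_upper)
  show ?thesis
  proof
    assume "madd a l \<le> b" then show "l \<le> resid a b" unfolding g S_def by (auto intro: Sup_upper)
  next
    assume "l \<le> resid a b"
    then have "madd a l \<le> madd a (Sup S)" unfolding g by (rule madd_mono2)
    then show "madd a l \<le> b" using \<open>madd a (Sup S) \<le> b\<close> by simp
  qed
qed

lemma resid_mono: "b \<le> c \<Longrightarrow> resid a b \<le> resid a c"
  by (metis resid_galois order.refl order.trans)

lemma resid_INF: "resid a (INF i\<in>I. f i) = (INF i\<in>I. resid a (f i))"
  by (rule eq_by_lower) (simp add: resid_galois[symmetric] le_INF_iff)

lemma resid_SUP1: "resid (SUP i\<in>I. f i) b = (INF i\<in>I. resid (f i) b)"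
  by (rule eq_by_lower) (simp add: resid_galois[symmetric] le_INF_iff madd_SUP1 SUP_le_iff)

lemma resid_resid: "resid a (resid b c) = resid (madd b a) c"
  by (rule eq_by_lower) (simp add: resid_galois[symmetric] madd_assoc)

lemma resid_shift: "resid a (b + ereal c) = resid a b + ereal c"
proof (rule eq_by_lower)
  fix l
  have "l \<le> resid a (b + ereal c) \<longleftrightarrow> madd a l \<le> b + ereal c" by (simp add: resid_galois)
  also have "\<dots> \<longleftrightarrow> madd a (l + ereal (-c)) \<le> b" by (simp add: E1 madd_shift)
  also have "\<dots> \<longleftrightarrow> l + ereal (-c) \<le> resid a b" by (simp add: resid_galois)
  also have "\<dots> \<longleftrightarrow> l \<le> resid a b + ereal c" by (simp add: E1)
  finally show "l \<le> resid a (b + ereal c) \<longleftrightarrow> l \<le> resid a b + ereal c" .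
qed

definition close :: "'a set \<Rightarrow> real \<Rightarrow> ('a \<Rightarrow> ereal) \<Rightarrow> ('a \<Rightarrow> ereal) \<Rightarrow> bool" where
  "close X e u v \<longleftrightarrow> (\<forall>x\<in>X. v x + ereal (-e) \<le> u x \<and> u x \<le> v x + ereal e)"

lemma close_sym: assumes "close X e u v" shows "close X e v u"
  unfolding close_def
proof (intro ballI conjI)
  fix x assume "x \<in> X"
  with assms have A: "v x + ereal (-e) \<le> u x" "u x \<le> v x + ereal e" by (auto simp: close_def)
  show "u x + ereal (-e) \<le> v x" using A(2) E1[of "u x" "v x" e] by simp
  show "v x \<le> u x + ereal e" using A(1) E2[of "v x" "-e" "u x"] by simp
qed

lemma ereal_add_ereal_assoc: "(x::ereal) + ereal a + ereal b = x + ereal (a + b)"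
  by (cases x) auto

lemma close_trans: "close X e1 u v \<Longrightarrow> close X e2 v w \<Longrightarrow> close X (e1 + e2) u w"
proof (unfold close_def, intro ballI conjI)
  fix x assume x: "x \<in> X" and A: "\<forall>x\<in>X. v x + ereal (- e1) \<le> u x \<and> u x \<le> v x + ereal e1"
    and B: "\<forall>x\<in>X. w x + ereal (- e2) \<le> v x \<and> v x \<le> w x + ereal e2"
  have "ereal (- (e1 + e2)) = ereal (-e2 + - e1)" by simp
  then have "w x + ereal (- (e1 + e2)) = w x + ereal (-e2) + ereal (-e1)"
    by (simp only: ereal_add_ereal_assoc)
  also have "\<dots> \<le> v x + ereal (-e1)" using B x by (intro add_right_mono) auto
  also have "\<dots> \<le> u x" using A x by auto
  finally show "w x + ereal (- (e1 + e2)) \<le> u x" .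
  have "u x \<le> v x + ereal e1" using A x by auto
  also have "\<dots> \<le> w x + ereal e2 + ereal e1" using B x by (intro add_right_mono) auto
  also have "\<dots> = w x + ereal (e2 + e1)" by (simp only: ereal_add_ereal_assoc)
  also have "\<dots> = w x + ereal (e1 + e2)" by (simp only: add.commute[of e2 e1])
  finally show "u x \<le> w x + ereal (e1 + e2)" .
qed

lemma close_mono: "close X e u v \<Longrightarrow> e \<le> e' \<Longrightarrow> close X e' u v"
proof (unfold close_def, intro ballI conjI)
  fix x assume x: "x \<in> X" and A: "\<forall>x\<in>X. v x + ereal (- e) \<le> u x \<and> u x \<le> v x + ereal e"
    and ee: "e \<le> e'"
  have "v x + ereal (- e') \<le> v x + ereal (-e)" using ee by (intro add_left_mono) auto
  then show "v x + ereal (- e') \<le> u x" using A x by (meson order.trans)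
  have "v x + ereal e \<le> v x + ereal e'" using ee by (intro add_left_mono) auto
  then show "u x \<le> v x + ereal e'" using A x by (meson order.trans)
qed

lemma close_eq: "(\<And>x. x \<in> X \<Longrightarrow> u x = v x) \<Longrightarrow> close X 0 u v"
  unfolding close_def by (auto simp: zero_ereal_def[symmetric])

lemma close_subset: "close X e u v \<Longrightarrow> Y \<subseteq> X \<Longrightarrow> close Y e u v"
  unfolding close_def by auto

lemma supdist_le: "0 \<le> e \<Longrightarrow> close X e u v \<Longrightarrow> supdist X u v \<le> ereal e"
  unfolding supdist_def close_def
  by (rule Inf_lower) (auto simp: madd_ereal)

lemma ereal_le_eps:
  assumes "\<And>r. r > e \<Longrightarrow> (a::ereal) \<le> b + ereal r"
  shows "a \<le> b + ereal e"
proof (cases a)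
  case (real x)
  show ?thesis
  proof (cases b)
    case (real y)
    have "x \<le> y + e"
    proof (rule ccontr)
      assume "\<not> x \<le> y + e"
      then have "(x - y + e) / 2 > e" by simp
      from assms[OF this] have "x \<le> y + (x - y + e)/2" using \<open>a = ereal x\<close> real by simp
      then show False using \<open>\<not> x \<le> y + e\<close> by (auto simp: field_simps)
    qed
    then show ?thesis using \<open>a = ereal x\<close> real by simp
  next
    case PInf then show ?thesis by simp
  next
    case MInf then show ?thesis using assms[of "e+1"] \<open>a = ereal x\<close> by simp
  qed
next
  case PInf
  then show ?thesis using assms[of "e+1"] by (cases b) auto
next
  case MInf then show ?thesis by simp
qed

lemma close_of_supdist:
  assumes "supdist X u v = ereal e"
  shows "close X e u v"
proof -
  define S where "S = {lam::ereal. 0 \<le> lam \<and>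
      (\<forall>x\<in>X. madd (v x) (-lam) \<le> u x \<and> u x \<le> madd (v x) lam)}"
  have IS: "Inf S = ereal e" using assms unfolding supdist_def S_def by simp
  have cr: "close X r u v" if "r > e" for r
  proof -
    have "Inf S < ereal r" using IS that by simp
    then obtain lam where lam: "lam \<in> S" "lam < ereal r" by (auto simp: Inf_less_iff)
    then have "0 \<le> lam" by (simp add: S_def)
    with lam obtain l where l: "lam = ereal l" "l < r" "0 \<le> l" by (cases lam) auto
    then have "close X l u v" using lam unfolding S_def close_def by (auto simp: madd_ereal)
    then show ?thesis using l by (elim close_mono) simp
  qed
  show ?thesis unfolding close_def
  proof (intro ballI conjI)
    fix x assume x: "x \<in> X"
    show "u x \<le> v x + ereal e"
      by (rule ereal_le_eps) (use cr x in \<open>auto simp: close_def\<close>)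
    have "v x \<le> u x + ereal e"
      by (rule ereal_le_eps) (use close_sym[OF cr] x in \<open>auto simp: close_def\<close>)
    then show "v x + ereal (-e) \<le> u x" using E2[of "v x" "-e" "u x"] by simp
  qed
qed

lemma matdist_eq: "matdist q p A B = supdist {(j,i). j<q \<and> i<p} (case_prod A) (case_prod B)"
  unfolding matdist_def supdist_def by (rule arg_cong[where f=Inf]) auto

lemma close_of_matdist:
  assumes "matdist q p A B = ereal e" "j < q" "i < p"
  shows "B j i + ereal (-e) \<le> A j i \<and> A j i \<le> B j i + ereal e"
  using close_of_supdist[OF assms(1)[unfolded matdist_eq]] assms(2,3) unfolding close_def by auto

lemma nonexp:
  assumes mono: "\<And>g g'. (\<forall>y\<in>Y. g y \<le> g' y) \<Longrightarrow> (\<forall>x\<in>X. F g x \<le> F g' x)"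
    and shift: "\<And>g c x. x \<in> X \<Longrightarrow> F (\<lambda>y. g y + ereal c) x = F g x + ereal c"
    and cl: "close Y e g g'"
  shows "close X e (F g) (F g')"
  unfolding close_def
proof (intro ballI conjI)
  fix x assume x: "x \<in> X"
  have "\<forall>y\<in>Y. g' y + ereal (-e) \<le> g y" using cl by (auto simp: close_def)
  from mono[OF this] x shift[OF x] show "F g' x + ereal (- e) \<le> F g x" by auto
  have "\<forall>y\<in>Y. g y \<le> g' y + ereal e" using cl by (auto simp: close_def)
  from mono[OF this] x shift[OF x] show "F g x \<le> F g' x + ereal e" by auto
qed

lemma Wop_mono: "(\<forall>i\<in>{..<p}. l i \<le> l' i) \<Longrightarrow> Wop p w l x \<le> Wop p w l' x"
  unfolding Wop_def by (intro SUP_mono) (auto intro: madd_mono2)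

lemma Wop_shift: "Wop p w (\<lambda>i. l i + ereal c) x = Wop p w l x + ereal c"
  unfolding Wop_def by (simp add: madd_shift SUP_add_const)

lemma Wop_nonexp: "close {..<p} e l l' \<Longrightarrow> close X e (Wop p w l) (Wop p w l')"
  by (rule nonexp[where Y="{..<p}"]) (auto intro: Wop_mono simp: Wop_shift)

lemma Wres_mono: "(\<forall>x\<in>X. g x \<le> g' x) \<Longrightarrow> Wres X w g i \<le> Wres X w g' i"
  unfolding Wres_def by (intro INF_mono) (auto intro: resid_mono)

lemma Wres_shift: "Wres X w (\<lambda>y. g y + ereal c) i = Wres X w g i + ereal c"
  unfolding Wres_def by (simp add: resid_shift INF_add_const)

lemma Wres_nonexp: "close X e g g' \<Longrightarrow> close I e (Wres X w g) (Wres X w g')"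
  by (rule nonexp[where Y="X"]) (auto intro: Wres_mono simp: Wres_shift)

lemma PW_nonexp: "close X e g g' \<Longrightarrow> close Y e (PW X p w g) (PW X p w g')"
  unfolding PW_def by (intro Wop_nonexp Wres_nonexp)

lemma pairing_mono: "(\<forall>x\<in>X. g x \<le> g' x) \<Longrightarrow> pairing X z g \<le> pairing X z g'"
  unfolding pairing_def by (intro SUP_mono) (auto intro: madd_mono2)

lemma pairing_shift: "pairing X z (\<lambda>y. g y + ereal c) = pairing X z g + ereal c"
  unfolding pairing_def by (simp add: madd_shift SUP_add_const)

lemma PZ_mono: "(\<forall>x\<in>X. g x \<le> g' x) \<Longrightarrow> PZ X q z g y \<le> PZ X q z g' y"
  unfolding PZ_def by (intro INF_mono) (auto intro!: resid_mono pairing_mono)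

lemma PZ_shift: "PZ X q z (\<lambda>y. g y + ereal c) x = PZ X q z g x + ereal c"
  unfolding PZ_def by (simp add: pairing_shift resid_shift INF_add_const)

lemma PZ_nonexp: "close X e g g' \<Longrightarrow> close Y e (PZ X q z g) (PZ X q z g')"
  by (rule nonexp[where Y="X"]) (auto intro: PZ_mono simp: PZ_shift)

lemma mp_resid_mono: "(\<forall>j\<in>{..<q}. l j \<le> l' j) \<Longrightarrow> mp_resid q M l i \<le> mp_resid q M l' i"
  unfolding mp_resid_def by (intro INF_mono) (auto intro!: resid_mono)

lemma mp_resid_shift: "mp_resid q M (\<lambda>j. l j + ereal c) i = mp_resid q M l i + ereal c"
  unfolding mp_resid_def by (simp add: resid_shift INF_add_const)

lemma mp_resid_nonexp: "close {..<q} e l l' \<Longrightarrow> close I e (mp_resid q M l) (mp_resid q M l')"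
  by (rule nonexp[where Y="{..<q}"]) (auto intro: mp_resid_mono simp: mp_resid_shift)

lemma mp_mult_pert:
  assumes "\<And>j i. j < q \<Longrightarrow> i < p \<Longrightarrow> K j i + ereal (-m) \<le> Kt j i \<and> Kt j i \<le> K j i + ereal m"
  shows "close {..<q} m (mp_mult p Kt l) (mp_mult p K l)"
  unfolding close_def
proof (intro ballI conjI)
  fix j assume j: "j \<in> {..<q}"
  have "mp_mult p K l j + ereal (-m) = (SUP i\<in>{..<p}. madd (K j i + ereal (-m)) (l i))"
    unfolding mp_mult_def by (simp add: madd_shift1 SUP_add_const)
  also have "\<dots> \<le> mp_mult p Kt l j" unfolding mp_mult_def
    using assms j by (intro SUP_mono) (auto intro!: bexI madd_mono1)
  finally show "mp_mult p K l j + ereal (-m) \<le> mp_mult p Kt l j" .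
  have "mp_mult p Kt l j \<le> (SUP i\<in>{..<p}. madd (K j i + ereal m) (l i))"
    unfolding mp_mult_def
    using assms j by (intro SUP_mono) (auto intro!: bexI madd_mono1)
  also have "\<dots> = mp_mult p K l j + ereal m"
    unfolding mp_mult_def by (simp add: madd_shift1 SUP_add_const)
  finally show "mp_mult p Kt l j \<le> mp_mult p K l j + ereal m" .
qed

lemma Sgrp_mono:
  assumes "0 \<le> t" "\<forall>y\<in>X. g y \<le> g' y"
  shows "Sgrp X U f L t g x \<le> Sgrp X U f L t g' x"
  unfolding Sgrp_def
proof (intro SUP_mono)
  fix ut assume "ut \<in> {(u, traj). admissible X U f L t x u traj}"
  then obtain u tr where ut: "ut = (u, tr)" "admissible X U f L t x u tr" by auto
  then have "tr t \<in> X" using assms(1) by (auto simp: admissible_def)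
  then show "\<exists>m\<in>{(u, traj). admissible X U f L t x u traj}.
        (case ut of (u, traj) \<Rightarrow> madd (ereal (integral\<^sup>L (lebesgue_on {0..t}) (\<lambda>s. L (traj s) (u s)))) (g (traj t)))
        \<le> (case m of (u, traj) \<Rightarrow> madd (ereal (integral\<^sup>L (lebesgue_on {0..t}) (\<lambda>s. L (traj s) (u s)))) (g' (traj t)))"
    using ut assms(2) by (intro bexI[of _ ut]) (auto intro: madd_mono2)
qed

lemma Sgrp_shift: "Sgrp X U f L t (\<lambda>y. g y + ereal c) x = Sgrp X U f L t g x + ereal c"
  unfolding Sgrp_def SUP_add_const[symmetric] by (rule SUP_cong) (auto simp: madd_shift)

lemma Sgrp_nonexp: "0 \<le> t \<Longrightarrow> close X e g g' \<Longrightarrow> close Y e (Sgrp X U f L t g) (Sgrp X U f L t g')"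
  by (rule nonexp[where Y="X"]) (auto intro: Sgrp_mono simp: Sgrp_shift)

lemma Sgrp_linear:
  "Sgrp X U f L t (Wop p w l) x = (SUP i\<in>{..<p}. madd (Sgrp X U f L t (w i) x) (l i))"
proof -
  let ?A = "{(u, traj). admissible X U f L t x u traj}"
  let ?I = "\<lambda>u traj. ereal (integral\<^sup>L (lebesgue_on {0..t}) (\<lambda>s. L (traj s) (u s)))"
  have "Sgrp X U f L t (Wop p w l) x =
     (SUP ut\<in>?A. SUP i\<in>{..<p}. madd (madd (?I (fst ut) (snd ut)) (w i (snd ut t))) (l i))"
    unfolding Sgrp_def Wop_def by (rule SUP_cong) (auto simp: madd_SUP madd_assoc)
  also have "\<dots> = (SUP i\<in>{..<p}. SUP ut\<in>?A. madd (madd (?I (fst ut) (snd ut)) (w i (snd ut t))) (l i))"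
    by (rule SUP_commute)
  also have "\<dots> = (SUP i\<in>{..<p}. madd (Sgrp X U f L t (w i) x) (l i))"
    unfolding Sgrp_def madd_SUP1 by (rule SUP_cong) (auto intro!: SUP_cong)
  finally show ?thesis .
qed

lemma pairing_Sgrp_Wop:
  "pairing X (z j) (Sgrp X U f L t (Wop p w l)) =
     mp_mult p (\<lambda>j i. pairing X (z j) (Sgrp X U f L t (w i))) l j"
proof -
  have "pairing X (z j) (Sgrp X U f L t (Wop p w l)) =
     (SUP x\<in>X. SUP i\<in>{..<p}. madd (madd (z j x) (Sgrp X U f L t (w i) x)) (l i))"
    unfolding pairing_def Sgrp_linear by (rule SUP_cong) (auto simp: madd_SUP madd_assoc)
  also have "\<dots> = (SUP i\<in>{..<p}. SUP x\<in>X. madd (madd (z j x) (Sgrp X U f L t (w i) x)) (l i))"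
    by (rule SUP_commute)
  also have "\<dots> = mp_mult p (\<lambda>j i. pairing X (z j) (Sgrp X U f L t (w i))) l j"
    unfolding mp_mult_def pairing_def madd_SUP1 by simp
  finally show ?thesis .
qed

lemma Wres_PZ:
  "Wres X w (PZ X q z h) = mp_resid q (\<lambda>j i. pairing X (z j) (w i)) (\<lambda>j. pairing X (z j) h)"
proof
  fix i
  have "Wres X w (PZ X q z h) i =
      (INF x\<in>X. INF j\<in>{..<q}. resid (madd (z j x) (w i x)) (pairing X (z j) h))"
    unfolding Wres_def PZ_def by (simp add: resid_INF resid_resid)
  also have "\<dots> = (INF j\<in>{..<q}. INF x\<in>X. resid (madd (z j x) (w i x)) (pairing X (z j) h))"
    by (rule INF_commute)
  also have "\<dots> = mp_resid q (\<lambda>j i. pairing X (z j) (w i)) (\<lambda>j. pairing X (z j) h) i"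
    unfolding mp_resid_def pairing_def resid_SUP1 by simp
  finally show "Wres X w (PZ X q z h) i = mp_resid q (\<lambda>j i. pairing X (z j) (w i)) (\<lambda>j. pairing X (z j) h) i" .
qed

lemma key_identity:
  "Wop p w (mp_resid q (\<lambda>j i. pairing X (z j) (w i))
      (mp_mult p (\<lambda>j i. pairing X (z j) (Sgrp X U f L t (w i))) l))
   = PW X p w (PZ X q z (Sgrp X U f L t (Wop p w l)))"
  unfolding PW_def Wres_PZ pairing_Sgrp_Wop by simp

lemma ac_D:
  assumes "abs_cont_on a b g" "0 < e"
  shows "\<exists>d>0. \<forall>(n::nat) (c::nat \<Rightarrow> real) (c'::nat \<Rightarrow> real).
        (\<forall>k<n. a \<le> c k \<and> c k \<le> c' k \<and> c' k \<le> b) \<and>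
        (\<forall>k<n. \<forall>l<n. k \<noteq> l \<longrightarrow> c' k \<le> c l \<or> c' l \<le> c k) \<and>
        (\<Sum>k<n. c' k - c k) < d
        \<longrightarrow> (\<Sum>k<n. norm (g (c' k) - g (c k))) < e"
  using mp[OF spec[OF assms(1)[unfolded abs_cont_on_def], of e] assms(2)] .

lemma ac_mono:
  assumes "abs_cont_on a b g" "a \<le> c" "d \<le> b"
  shows "abs_cont_on c d g"
  unfolding abs_cont_on_def
proof (intro allI impI)
  fix e :: real assume "0 < e"
  then obtain d0 where d0: "d0 > 0" and H: "\<forall>(n::nat) (c::nat \<Rightarrow> real) (c'::nat \<Rightarrow> real).
        (\<forall>k<n. a \<le> c k \<and> c k \<le> c' k \<and> c' k \<le> b) \<and>
        (\<forall>k<n. \<forall>l<n. k \<noteq> l \<longrightarrow> c' k \<le> c l \<or> c' l \<le> c k) \<and>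
        (\<Sum>k<n. c' k - c k) < d0
        \<longrightarrow> (\<Sum>k<n. norm (g (c' k) - g (c k))) < e"
    using ac_D[OF assms(1) \<open>0 < e\<close>] by blast
  show "\<exists>d0>0. \<forall>(n::nat) (c'a::nat \<Rightarrow> real) (c'::nat \<Rightarrow> real).
        (\<forall>k<n. c \<le> c'a k \<and> c'a k \<le> c' k \<and> c' k \<le> d) \<and>
        (\<forall>k<n. \<forall>l<n. k \<noteq> l \<longrightarrow> c' k \<le> c'a l \<or> c' l \<le> c'a k) \<and>
        (\<Sum>k<n. c' k - c'a k) < d0
        \<longrightarrow> (\<Sum>k<n. norm (g (c' k) - g (c'a k))) < e"
  proof (intro exI[of _ d0] conjI allI impI d0)
    fix n and c1 c1' :: "nat \<Rightarrow> real"
    assume A: "(\<forall>k<n. c \<le> c1 k \<and> c1 k \<le> c1' k \<and> c1' k \<le> d) \<and>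
        (\<forall>k<n. \<forall>l<n. k \<noteq> l \<longrightarrow> c1' k \<le> c1 l \<or> c1' l \<le> c1 k) \<and>
        (\<Sum>k<n. c1' k - c1 k) < d0"
    have "\<forall>k<n. a \<le> c1 k \<and> c1 k \<le> c1' k \<and> c1' k \<le> b"
      using A assms(2,3) by (meson order.trans)
    then show "(\<Sum>k<n. norm (g (c1' k) - g (c1 k))) < e"
      using A by (intro H[rule_format]) blast
  qed
qed

lemma ac_shift:
  assumes "abs_cont_on a b g"
  shows "abs_cont_on (a - h) (b - h) (\<lambda>s. g (s + h))"
  unfolding abs_cont_on_def
proof (intro allI impI)
  fix e :: real assume "0 < e"
  then obtain d0 where d0: "d0 > 0" and H: "\<forall>(n::nat) (c::nat \<Rightarrow> real) (c'::nat \<Rightarrow> real).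
        (\<forall>k<n. a \<le> c k \<and> c k \<le> c' k \<and> c' k \<le> b) \<and>
        (\<forall>k<n. \<forall>l<n. k \<noteq> l \<longrightarrow> c' k \<le> c l \<or> c' l \<le> c k) \<and>
        (\<Sum>k<n. c' k - c k) < d0
        \<longrightarrow> (\<Sum>k<n. norm (g (c' k) - g (c k))) < e"
    using ac_D[OF assms(1) \<open>0 < e\<close>] by blast
  show "\<exists>d>0. \<forall>(n::nat) (c::nat \<Rightarrow> real) (c'::nat \<Rightarrow> real).
        (\<forall>k<n. a - h \<le> c k \<and> c k \<le> c' k \<and> c' k \<le> b - h) \<and>
        (\<forall>k<n. \<forall>l<n. k \<noteq> l \<longrightarrow> c' k \<le> c l \<or> c' l \<le> c k) \<and>
        (\<Sum>k<n. c' k - c k) < d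
        \<longrightarrow> (\<Sum>k<n. norm (g (c' k + h) - g (c k + h))) < e"
  proof (intro exI[of _ d0] conjI allI impI d0)
    fix n and c c' :: "nat \<Rightarrow> real"
    assume A: "(\<forall>k<n. a - h \<le> c k \<and> c k \<le> c' k \<and> c' k \<le> b - h) \<and>
        (\<forall>k<n. \<forall>l<n. k \<noteq> l \<longrightarrow> c' k \<le> c l \<or> c' l \<le> c k) \<and>
        (\<Sum>k<n. c' k - c k) < d0"
    have "(\<Sum>k<n. (c' k + h) - (c k + h)) < d0" using A by simp
    then show "(\<Sum>k<n. norm (g (c' k + h) - g (c k + h))) < e"
      using A by (intro H[rule_format, of n "\<lambda>k. c k + h" "\<lambda>k. c' k + h"]) auto
  qed
qed

lemma ac_cong:
  assumes "abs_cont_on a b g" "\<And>s. a \<le> s \<Longrightarrow> s \<le> b \<Longrightarrow> g s = g' s"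
  shows "abs_cont_on a b g'"
  unfolding abs_cont_on_def
proof (intro allI impI)
  fix e :: real assume "0 < e"
  then obtain d0 where d0: "d0 > 0" and H: "\<forall>(n::nat) (c::nat \<Rightarrow> real) (c'::nat \<Rightarrow> real).
        (\<forall>k<n. a \<le> c k \<and> c k \<le> c' k \<and> c' k \<le> b) \<and>
        (\<forall>k<n. \<forall>l<n. k \<noteq> l \<longrightarrow> c' k \<le> c l \<or> c' l \<le> c k) \<and>
        (\<Sum>k<n. c' k - c k) < d0
        \<longrightarrow> (\<Sum>k<n. norm (g (c' k) - g (c k))) < e"
    using ac_D[OF assms(1) \<open>0 < e\<close>] by blast
  show "\<exists>d>0. \<forall>(n::nat) (c::nat \<Rightarrow> real) (c'::nat \<Rightarrow> real).
        (\<forall>k<n. a \<le> c k \<and> c k \<le> c' k \<and> c' k \<le> b) \<and>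
        (\<forall>k<n. \<forall>l<n. k \<noteq> l \<longrightarrow> c' k \<le> c l \<or> c' l \<le> c k) \<and>
        (\<Sum>k<n. c' k - c k) < d
        \<longrightarrow> (\<Sum>k<n. norm (g' (c' k) - g' (c k))) < e"
  proof (intro exI[of _ d0] conjI allI impI d0)
    fix n and c c' :: "nat \<Rightarrow> real"
    assume A: "(\<forall>k<n. a \<le> c k \<and> c k \<le> c' k \<and> c' k \<le> b) \<and>
        (\<forall>k<n. \<forall>l<n. k \<noteq> l \<longrightarrow> c' k \<le> c l \<or> c' l \<le> c k) \<and>
        (\<Sum>k<n. c' k - c k) < d0"
    have "(\<Sum>k<n. norm (g' (c' k) - g' (c k))) = (\<Sum>k<n. norm (g (c' k) - g (c k)))"
      using A assms(2) by (intro sum.cong) auto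
    also have "\<dots> < e" using A by (intro H[rule_format]) auto
    finally show "(\<Sum>k<n. norm (g' (c' k) - g' (c k))) < e" .
  qed
qed

lemma ac_combine:
  assumes ac1: "abs_cont_on a m g" and ac2: "abs_cont_on m b g" and am: "a \<le> m" and mb: "m \<le> b"
  shows "abs_cont_on a b g"
  unfolding abs_cont_on_def
proof (intro allI impI)
  fix e :: real assume e: "0 < e"
  then have e2: "0 < e/2" by simp
  obtain d1 where d1: "d1 > 0" and H1: "\<forall>(n::nat) (c::nat \<Rightarrow> real) (c'::nat \<Rightarrow> real).
        (\<forall>k<n. a \<le> c k \<and> c k \<le> c' k \<and> c' k \<le> m) \<and>
        (\<forall>k<n. \<forall>l<n. k \<noteq> l \<longrightarrow> c' k \<le> c l \<or> c' l \<le> c k) \<and>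
        (\<Sum>k<n. c' k - c k) < d1
        \<longrightarrow> (\<Sum>k<n. norm (g (c' k) - g (c k))) < e/2"
    using ac_D[OF ac1 e2] by blast
  obtain d2 where d2: "d2 > 0" and H2: "\<forall>(n::nat) (c::nat \<Rightarrow> real) (c'::nat \<Rightarrow> real).
        (\<forall>k<n. m \<le> c k \<and> c k \<le> c' k \<and> c' k \<le> b) \<and>
        (\<forall>k<n. \<forall>l<n. k \<noteq> l \<longrightarrow> c' k \<le> c l \<or> c' l \<le> c k) \<and>
        (\<Sum>k<n. c' k - c k) < d2
        \<longrightarrow> (\<Sum>k<n. norm (g (c' k) - g (c k))) < e/2"
    using ac_D[OF ac2 e2] by blast
  show "\<exists>d>0. \<forall>(n::nat) (c::nat \<Rightarrow> real) (c'::nat \<Rightarrow> real).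
        (\<forall>k<n. a \<le> c k \<and> c k \<le> c' k \<and> c' k \<le> b) \<and>
        (\<forall>k<n. \<forall>l<n. k \<noteq> l \<longrightarrow> c' k \<le> c l \<or> c' l \<le> c k) \<and>
        (\<Sum>k<n. c' k - c k) < d
        \<longrightarrow> (\<Sum>k<n. norm (g (c' k) - g (c k))) < e"
  proof (intro exI[of _ "min d1 d2"] conjI allI impI)
    show "0 < min d1 d2" using d1 d2 by simp
    fix n and c c' :: "nat \<Rightarrow> real"
    assume A: "(\<forall>k<n. a \<le> c k \<and> c k \<le> c' k \<and> c' k \<le> b) \<and>
        (\<forall>k<n. \<forall>l<n. k \<noteq> l \<longrightarrow> c' k \<le> c l \<or> c' l \<le> c k) \<and>
        (\<Sum>k<n. c' k - c k) < min d1 d2"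
    define c1 where "c1 k = min (c k) m" for k
    define c1' where "c1' k = min (c' k) m" for k
    define c2 where "c2 k = max (c k) m" for k
    define c2' where "c2' k = max (c' k) m" for k
    have s1: "(\<Sum>k<n. c1' k - c1 k) \<le> (\<Sum>k<n. c' k - c k)"
      using A by (intro sum_mono) (auto simp: c1_def c1'_def min_def)
    have s2: "(\<Sum>k<n. c2' k - c2 k) \<le> (\<Sum>k<n. c' k - c k)"
      using A by (intro sum_mono) (auto simp: c2_def c2'_def max_def)
    have "(\<Sum>k<n. norm (g (c1' k) - g (c1 k))) < e/2"
    proof (rule H1[rule_format], intro conjI allI impI)
      fix k assume "k < n"
      then show "a \<le> c1 k" "c1 k \<le> c1' k" "c1' k \<le> m" using A am by (auto simp: c1_def c1'_def)
    next
      fix k l assume "k < n" "l < n" "k \<noteq> l"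
      then have "c' k \<le> c l \<or> c' l \<le> c k" using A by blast
      then show "c1' k \<le> c1 l \<or> c1' l \<le> c1 k" unfolding c1_def c1'_def by (meson min.mono order_refl)
    next
      show "(\<Sum>k<n. c1' k - c1 k) < d1" using s1 A by linarith
    qed
    moreover
    have "(\<Sum>k<n. norm (g (c2' k) - g (c2 k))) < e/2"
    proof (rule H2[rule_format], intro conjI allI impI)
      fix k assume "k < n"
      then show "m \<le> c2 k" "c2 k \<le> c2' k" "c2' k \<le> b" using A mb by (auto simp: c2_def c2'_def)
    next
      fix k l assume "k < n" "l < n" "k \<noteq> l"
      then have "c' k \<le> c l \<or> c' l \<le> c k" using A by blast
      then show "c2' k \<le> c2 l \<or> c2' l \<le> c2 k" unfolding c2_def c2'_def by (meson max.mono order_refl)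
    next
      show "(\<Sum>k<n. c2' k - c2 k) < d2" using s2 A by linarith
    qed
    moreover
    have "(\<Sum>k<n. norm (g (c' k) - g (c k))) \<le>
          (\<Sum>k<n. norm (g (c1' k) - g (c1 k)) + norm (g (c2' k) - g (c2 k)))"
    proof (rule sum_mono)
      fix k assume "k \<in> {..<n}"
      then have ck: "c k \<le> c' k" using A by auto
      show "norm (g (c' k) - g (c k)) \<le> norm (g (c1' k) - g (c1 k)) + norm (g (c2' k) - g (c2 k))"
      proof (cases "c' k \<le> m")
        case True
        then show ?thesis using ck by (simp add: c1_def c1'_def c2_def c2'_def)
      next
        case False
        show ?thesis
        proof (cases "m \<le> c k")
          case True
          then show ?thesis using ck by (simp add: c1_def c1'_def c2_def c2'_def)
        next
          case False
          then have "c1 k = c k" "c1' k = m" "c2 k = m" "c2' k = c' k"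
            using \<open>\<not> c' k \<le> m\<close> by (auto simp: c1_def c1'_def c2_def c2'_def)
          then show ?thesis using norm_triangle_ineq[of "g m - g (c k)" "g (c' k) - g m"]
            by (simp add: add.commute)
        qed
      qed
    qed
    ultimately show "(\<Sum>k<n. norm (g (c' k) - g (c k))) < e"
      by (simp add: sum.distrib)
  qed
qed

lemma AE_lebesgue_on_iff:
  assumes S: "S \<in> sets lebesgue"
  shows "(AE x in lebesgue_on S. P x) \<longleftrightarrow> (\<exists>N. negligible N \<and> (\<forall>x\<in>S. x \<notin> N \<longrightarrow> P x))"
proof
  assume "AE x in lebesgue_on S. P x"
  then obtain N where N: "{x \<in> space (lebesgue_on S). \<not> P x} \<subseteq> N" "N \<in> null_sets (lebesgue_on S)"
    by (rule AE_E) blast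
  then have "N \<in> null_sets lebesgue" using null_sets_restrict_space[OF S] by blast
  then have "negligible N" using negligible_iff_null_sets by blast
  moreover have "\<forall>x\<in>S. x \<notin> N \<longrightarrow> P x" using N(1) by (auto simp: space_restrict_space)
  ultimately show "\<exists>N. negligible N \<and> (\<forall>x\<in>S. x \<notin> N \<longrightarrow> P x)" by blast
next
  assume "\<exists>N. negligible N \<and> (\<forall>x\<in>S. x \<notin> N \<longrightarrow> P x)"
  then obtain N where N: "negligible N" "\<forall>x\<in>S. x \<notin> N \<longrightarrow> P x" by blast
  have "negligible (N \<inter> S)" using N(1) negligible_subset by blast
  then have "N \<inter> S \<in> null_sets lebesgue" using negligible_iff_null_sets by blast
  then have "N \<inter> S \<in> null_sets (lebesgue_on S)" using null_sets_restrict_space[OF S] by blast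
  moreover have "{x \<in> space (lebesgue_on S). \<not> P x} \<subseteq> N \<inter> S" using N(2) by (auto simp: space_restrict_space)
  ultimately show "AE x in lebesgue_on S. P x" by (rule AE_I')
qed

lemma bm_shift:
  fixes u :: "real \<Rightarrow> 'b::euclidean_space"
  assumes "u \<in> borel_measurable (lebesgue_on {a..b})"
  shows "(\<lambda>s. u (s + c)) \<in> borel_measurable (lebesgue_on {a-c..b-c})"
proof -
  have "(\<lambda>s. if s \<in> {a..b} then u s else 0) \<in> borel_measurable lebesgue"
    using assms by (intro borel_measurable_if_I) auto
  moreover have "(\<lambda>x::real. c + 1 * x) \<in> lebesgue \<rightarrow>\<^sub>M lebesgue"
    using lebesgue_affine_measurable[where c="\<lambda>x::real. 1" and t=c] by simp
  ultimately have "(\<lambda>s. if s \<in> {a..b} then u s else 0) \<circ> (\<lambda>x::real. c + 1 * x) \<in> borel_measurable lebesgue"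
    by (rule measurable_comp[rotated])
  moreover have "(\<lambda>s. if s \<in> {a..b} then u s else 0) \<circ> (\<lambda>x::real. c + 1 * x)
      = (\<lambda>s. if s \<in> {a-c..b-c} then u (s + c) else 0)"
    by (auto simp: fun_eq_iff add.commute)
  ultimately show ?thesis by (intro borel_measurable_if_D) simp
qed

lemma bm_concat:
  fixes u1 u2 :: "real \<Rightarrow> 'b::euclidean_space"
  assumes "u1 \<in> borel_measurable (lebesgue_on {0..d})" "u2 \<in> borel_measurable (lebesgue_on {0..t})"
    and "0 \<le> d" "0 \<le> t"
  shows "(\<lambda>s. if s \<le> d then u1 s else u2 (s - d)) \<in> borel_measurable (lebesgue_on {0..d+t})"
proof -
  have A: "(\<lambda>s. if s \<in> {0..d} then u1 s else 0) \<in> borel_measurable lebesgue"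
    using assms by (intro borel_measurable_if_I) auto
  have "(\<lambda>s. u2 (s + -d)) \<in> borel_measurable (lebesgue_on {0 - -d..t - -d})"
    by (rule bm_shift[OF assms(2)])
  then have "(\<lambda>s. u2 (s - d)) \<in> borel_measurable (lebesgue_on {d..d+t})" by (simp add: add.commute)
  then have "(\<lambda>s. u2 (s - d)) \<in> borel_measurable (lebesgue_on {d<..d+t})"
    by (rule measurable_restrict_mono) auto
  then have B: "(\<lambda>s. if s \<in> {d<..d+t} then u2 (s - d) else 0) \<in> borel_measurable lebesgue"
    by (intro borel_measurable_if_I) auto
  have "(\<lambda>s. (if s \<in> {0..d} then u1 s else 0) + (if s \<in> {d<..d+t} then u2 (s - d) else 0))
        \<in> borel_measurable lebesgue"
    using A B by (rule borel_measurable_add)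
  moreover have "(\<lambda>s. (if s \<in> {0..d} then u1 s else 0) + (if s \<in> {d<..d+t} then u2 (s - d) else 0))
      = (\<lambda>s. if s \<in> {0..d+t} then (if s \<le> d then u1 s else u2 (s - d)) else 0)"
    using assms(3,4) by (auto simp: fun_eq_iff)
  ultimately show ?thesis by (intro borel_measurable_if_D) simp
qed

lemma hbi_shift:
  fixes f :: "real \<Rightarrow> 'b::euclidean_space"
  assumes "has_bochner_integral (lebesgue_on {a..b}) f i"
  shows "has_bochner_integral (lebesgue_on {a-c..b-c}) (\<lambda>x. f (x + c)) i"
proof -
  have eq: "indicat_real {a..b} (c + 1 * x) *\<^sub>R f (c + 1 * x) = indicat_real {a-c..b-c} x *\<^sub>R f (x + c)" for x
    by (auto simp: indicator_def add.commute)
  have "has_bochner_integral lebesgue (\<lambda>x. indicator {a..b} x *\<^sub>R f x) i"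
    using assms by (auto simp: has_bochner_integral_restrict_space)
  then have "has_bochner_integral lebesgue (\<lambda>x. indicator {a-c..b-c} x *\<^sub>R f (x + c)) i"
    using has_bochner_integral_lebesgue_real_affine_iff [of 1 "(\<lambda>x. indicator {a..b} x *\<^sub>R f x)" i c]
    by (simp only: eq) simp
  then show ?thesis
    by (auto simp: has_bochner_integral_restrict_space)
qed

lemma int_shift:
  fixes f :: "real \<Rightarrow> 'b::euclidean_space"
  assumes "integrable (lebesgue_on {a..b}) f"
  shows "integrable (lebesgue_on {a-c..b-c}) (\<lambda>x. f (x + c))"
    and "integral\<^sup>L (lebesgue_on {a-c..b-c}) (\<lambda>x. f (x + c)) = integral\<^sup>L (lebesgue_on {a..b}) f"
  using hbi_shift[of a b f "integral\<^sup>L (lebesgue_on {a..b}) f" c] assms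
  by (auto simp: has_bochner_integral_iff)

lemma int_iff_abs:
  fixes f :: "'a::euclidean_space \<Rightarrow> 'b::euclidean_space"
  assumes "S \<in> sets lebesgue"
  shows "integrable (lebesgue_on S) f \<longleftrightarrow> f absolutely_integrable_on S"
  using assms by (simp add: absolutely_integrable_on_def set_integrable_def integrable_restrict_space)

lemma int_spike:
  fixes f g :: "real \<Rightarrow> 'b::euclidean_space"
  assumes "integrable (lebesgue_on {a..b}) f" "\<And>s. s \<in> {a..b} \<Longrightarrow> s \<noteq> c \<Longrightarrow> g s = f s"
  shows "integrable (lebesgue_on {a..b}) g"
    and "integral\<^sup>L (lebesgue_on {a..b}) g = integral\<^sup>L (lebesgue_on {a..b}) f"
proof -
  have "f absolutely_integrable_on {a..b}" using assms(1) int_iff_abs[of "{a..b}" f] by simp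
  then have "g absolutely_integrable_on {a..b}"
    by (rule absolutely_integrable_spike[where S="{c}"]) (use assms(2) in auto)
  then show g: "integrable (lebesgue_on {a..b}) g" using int_iff_abs[of "{a..b}" g] by simp
  have "integral {a..b} g = integral {a..b} f"
    by (rule integral_spike[where S="{c}"]) (use assms(2) in auto)
  then show "integral\<^sup>L (lebesgue_on {a..b}) g = integral\<^sup>L (lebesgue_on {a..b}) f"
    using assms(1) g by (simp add: lebesgue_integral_eq_integral)
qed

lemma adm_split:
  assumes adm: "admissible X U f L (d + t) x u y" and d: "0 \<le> d" and t: "0 \<le> t"
  shows "admissible X U f L d x u y"
    and "admissible X U f L t (y d) (\<lambda>s. u (s + d)) (\<lambda>s. y (s + d))"
    and "integral\<^sup>L (lebesgue_on {0..d+t}) (\<lambda>s. L (y s) (u s)) =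
         integral\<^sup>L (lebesgue_on {0..d}) (\<lambda>s. L (y s) (u s)) +
         integral\<^sup>L (lebesgue_on {0..t}) (\<lambda>s. L (y (s + d)) (u (s + d)))"
proof -
  have meas: "u \<in> borel_measurable (lebesgue_on {0..d+t})"
    and uU: "\<forall>s\<in>{0..d+t}. u s \<in> U" and yX: "\<forall>s\<in>{0..d+t}. y s \<in> X"
    and ac: "abs_cont_on 0 (d+t) y"
    and ae: "AE s in lebesgue_on {0..d+t}. (y has_vector_derivative f (y s) (u s)) (at s within {0..d+t})"
    and y0: "y 0 = x"
    and int: "integrable (lebesgue_on {0..d+t}) (\<lambda>s. L (y s) (u s))"
    using adm unfolding admissible_def by auto
  obtain N where N: "negligible N"
    and ND: "\<And>s. s \<in> {0..d+t} \<Longrightarrow> s \<notin> N \<Longrightarrow> (y has_vector_derivative f (y s) (u s)) (at s within {0..d+t})"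
    using ae by (subst (asm) AE_lebesgue_on_iff) auto
  show "admissible X U f L d x u y"
    unfolding admissible_def
  proof (intro conjI)
    show "u \<in> borel_measurable (lebesgue_on {0..d})"
      by (rule measurable_restrict_mono[OF meas]) (use t in auto)
    show "\<forall>s\<in>{0..d}. u s \<in> U" "\<forall>s\<in>{0..d}. y s \<in> X" using uU yX t by auto
    show "abs_cont_on 0 d y" by (rule ac_mono[OF ac]) (use t in auto)
    show "AE s in lebesgue_on {0..d}. (y has_vector_derivative f (y s) (u s)) (at s within {0..d})"
    proof (subst AE_lebesgue_on_iff, simp, intro exI conjI)
      show "negligible N" by (rule N)
      show "\<forall>s\<in>{0..d}. s \<notin> N \<longrightarrow> (y has_vector_derivative f (y s) (u s)) (at s within {0..d})"
      proof (intro ballI impI)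
        fix s assume s: "s \<in> {0..d}" "s \<notin> N"
        then have "(y has_vector_derivative f (y s) (u s)) (at s within {0..d+t})" using t by (intro ND) auto
        then show "(y has_vector_derivative f (y s) (u s)) (at s within {0..d})"
          by (rule has_vector_derivative_within_subset) (use t in auto)
      qed
    qed
    show "y 0 = x" by (rule y0)
    show "integrable (lebesgue_on {0..d}) (\<lambda>s. L (y s) (u s))"
      by (rule integrable_subinterval[OF int]) (use t in auto)
  qed
  have int2: "integrable (lebesgue_on {d..d+t}) (\<lambda>s. L (y s) (u s))"
    by (rule integrable_subinterval[OF int]) (use d in auto)
  show "admissible X U f L t (y d) (\<lambda>s. u (s + d)) (\<lambda>s. y (s + d))"
    unfolding admissible_def
  proof (intro conjI)
    have "u \<in> borel_measurable (lebesgue_on {d..d+t})"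
      by (rule measurable_restrict_mono[OF meas]) (use d in auto)
    from bm_shift[OF this, of d] show "(\<lambda>s. u (s + d)) \<in> borel_measurable (lebesgue_on {0..t})"
      by simp
    show "\<forall>s\<in>{0..t}. u (s + d) \<in> U" "\<forall>s\<in>{0..t}. y (s + d) \<in> X" using uU yX d by auto
    have "abs_cont_on d (d+t) y" by (rule ac_mono[OF ac]) (use d in auto)
    from ac_shift[OF this, of d] show "abs_cont_on 0 t (\<lambda>s. y (s + d))" by simp
    show "AE s in lebesgue_on {0..t}. ((\<lambda>s. y (s + d)) has_vector_derivative f (y (s + d)) (u (s + d))) (at s within {0..t})"
    proof (subst AE_lebesgue_on_iff, simp, intro exI conjI)
      show "negligible ((+) (-d) ` N)" by (rule negligible_translation[OF N])
      show "\<forall>s\<in>{0..t}. s \<notin> (+) (-d) ` N \<longrightarrow>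
          ((\<lambda>s. y (s + d)) has_vector_derivative f (y (s + d)) (u (s + d))) (at s within {0..t})"
      proof (intro ballI impI)
        fix s assume s: "s \<in> {0..t}" "s \<notin> (+) (-d) ` N"
        then have "s + d \<notin> N" by (metis add_minus_cancel image_eqI add.commute)
        then have D: "(y has_vector_derivative f (y (s + d)) (u (s + d))) (at (s + d) within {0..d+t})"
          using s d by (intro ND) auto
        have D1: "((\<lambda>s. s + d) has_vector_derivative 1) (at s within {0..t})"
          by (auto intro!: derivative_eq_intros)
        have D2: "(y has_vector_derivative f (y (s + d)) (u (s + d))) (at ((\<lambda>s. s + d) s) within (\<lambda>s. s + d) ` {0..t})"
          using D by (rule has_vector_derivative_within_subset) (use d in auto)
        from vector_diff_chain_within[OF D1 D2]
        show "((\<lambda>s. y (s + d)) has_vector_derivative f (y (s + d)) (u (s + d))) (at s within {0..t})"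
          by (simp add: o_def)
      qed
    qed
    show "y (0 + d) = y d" by simp
    from int_shift(1)[OF int2, of d] show "integrable (lebesgue_on {0..t}) (\<lambda>s. L (y (s + d)) (u (s + d)))"
      by simp
  qed
  have "integral\<^sup>L (lebesgue_on {0..d+t}) (\<lambda>s. L (y s) (u s)) =
        integral\<^sup>L (lebesgue_on {0..d}) (\<lambda>s. L (y s) (u s)) +
        integral\<^sup>L (lebesgue_on {d..d+t}) (\<lambda>s. L (y s) (u s))"
    by (rule Equivalence_Measurable_On_Borel.integral_combine[OF int]) (use d t in auto)
  moreover have "integral\<^sup>L (lebesgue_on {d..d+t}) (\<lambda>s. L (y s) (u s)) =
      integral\<^sup>L (lebesgue_on {0..t}) (\<lambda>s. L (y (s + d)) (u (s + d)))"
    using int_shift(2)[OF int2, of d] by simp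
  ultimately show "integral\<^sup>L (lebesgue_on {0..d+t}) (\<lambda>s. L (y s) (u s)) =
         integral\<^sup>L (lebesgue_on {0..d}) (\<lambda>s. L (y s) (u s)) +
         integral\<^sup>L (lebesgue_on {0..t}) (\<lambda>s. L (y (s + d)) (u (s + d)))" by simp
qed


lemma adm_concat:
  assumes a1: "admissible X U f L d x u1 y1" and a2: "admissible X U f L t (y1 d) u2 y2"
    and d: "0 \<le> d" and t: "0 \<le> t"
  defines "u \<equiv> (\<lambda>s. if s \<le> d then u1 s else u2 (s - d))"
    and "y \<equiv> (\<lambda>s. if s \<le> d then y1 s else y2 (s - d))"
  shows "admissible X U f L (d + t) x u y"
    and "integral\<^sup>L (lebesgue_on {0..d+t}) (\<lambda>s. L (y s) (u s)) =
         integral\<^sup>L (lebesgue_on {0..d}) (\<lambda>s. L (y1 s) (u1 s)) +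
         integral\<^sup>L (lebesgue_on {0..t}) (\<lambda>s. L (y2 s) (u2 s))"
    and "y (d + t) = y2 t"
proof -
  have meas1: "u1 \<in> borel_measurable (lebesgue_on {0..d})"
    and uU1: "\<forall>s\<in>{0..d}. u1 s \<in> U" and yX1: "\<forall>s\<in>{0..d}. y1 s \<in> X"
    and ac1: "abs_cont_on 0 d y1"
    and ae1: "AE s in lebesgue_on {0..d}. (y1 has_vector_derivative f (y1 s) (u1 s)) (at s within {0..d})"
    and y10: "y1 0 = x"
    and int1: "integrable (lebesgue_on {0..d}) (\<lambda>s. L (y1 s) (u1 s))"
    using a1 unfolding admissible_def by auto
  have meas2: "u2 \<in> borel_measurable (lebesgue_on {0..t})"
    and uU2: "\<forall>s\<in>{0..t}. u2 s \<in> U" and yX2: "\<forall>s\<in>{0..t}. y2 s \<in> X"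
    and ac2: "abs_cont_on 0 t y2"
    and ae2: "AE s in lebesgue_on {0..t}. (y2 has_vector_derivative f (y2 s) (u2 s)) (at s within {0..t})"
    and y20: "y2 0 = y1 d"
    and int2: "integrable (lebesgue_on {0..t}) (\<lambda>s. L (y2 s) (u2 s))"
    using a2 unfolding admissible_def by auto
  obtain N1 where N1: "negligible N1"
    and ND1: "\<And>s. s \<in> {0..d} \<Longrightarrow> s \<notin> N1 \<Longrightarrow> (y1 has_vector_derivative f (y1 s) (u1 s)) (at s within {0..d})"
    using ae1 by (subst (asm) AE_lebesgue_on_iff) auto
  obtain N2 where N2: "negligible N2"
    and ND2: "\<And>s. s \<in> {0..t} \<Longrightarrow> s \<notin> N2 \<Longrightarrow> (y2 has_vector_derivative f (y2 s) (u2 s)) (at s within {0..t})"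
    using ae2 by (subst (asm) AE_lebesgue_on_iff) auto
  have yd: "y s = y2 (s - d)" if "d \<le> s" for s
    using that y20 by (cases "s \<le> d") (auto simp: y_def)
  have int2': "integrable (lebesgue_on {d..d+t}) (\<lambda>s. L (y2 (s - d)) (u2 (s - d)))"
    using int_shift(1)[OF int2, of "-d"] by (simp add: add.commute)
  have intB: "integrable (lebesgue_on {d..d+t}) (\<lambda>s. L (y s) (u s))"
    by (rule int_spike(1)[OF int2', where c=d]) (auto simp: yd u_def)
  show adm: "admissible X U f L (d + t) x u y"
    unfolding admissible_def
  proof (intro conjI)
    show "u \<in> borel_measurable (lebesgue_on {0..d + t})"
      unfolding u_def by (rule bm_concat[OF meas1 meas2 d t])
    show "\<forall>s\<in>{0..d + t}. u s \<in> U" using uU1 uU2 by (auto simp: u_def)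
    show "\<forall>s\<in>{0..d + t}. y s \<in> X" using yX1 yX2 by (auto simp: y_def)
    have "abs_cont_on 0 d y" by (rule ac_cong[OF ac1]) (auto simp: y_def)
    moreover have "abs_cont_on d (d + t) y"
    proof -
      from ac_shift[OF ac2, of "-d"] have "abs_cont_on d (d + t) (\<lambda>s. y2 (s - d))"
        by (simp add: add.commute)
      then show ?thesis by (rule ac_cong) (auto simp: yd)
    qed
    ultimately show "abs_cont_on 0 (d + t) y" by (rule ac_combine) (use d t in auto)
    show "AE s in lebesgue_on {0..d + t}. (y has_vector_derivative f (y s) (u s)) (at s within {0..d + t})"
    proof (subst AE_lebesgue_on_iff, simp, intro exI conjI)
      show "negligible ({d} \<union> N1 \<union> (+) d ` N2)"
        using N1 N2 negligible_translation[OF N2, of d] by (auto intro: negligible_Un)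
      show "\<forall>s\<in>{0..d + t}. s \<notin> {d} \<union> N1 \<union> (+) d ` N2 \<longrightarrow>
          (y has_vector_derivative f (y s) (u s)) (at s within {0..d + t})"
      proof (intro ballI impI)
        fix s assume s: "s \<in> {0..d + t}" and sN: "s \<notin> {d} \<union> N1 \<union> (+) d ` N2"
        show "(y has_vector_derivative f (y s) (u s)) (at s within {0..d + t})"
        proof (cases "s < d")
          case True
          then have "(y1 has_vector_derivative f (y1 s) (u1 s)) (at s within {0..d})"
            using s sN by (intro ND1) auto
          then have "(y has_vector_derivative f (y1 s) (u1 s)) (at s within {0..d})"
            by (rule has_vector_derivative_transform_within[where d=1]) (use s True in \<open>auto simp: y_def\<close>)
          moreover have "at s within {0..d} = at s within {0..d + t}"
            by (rule at_within_nhd[where S="{..<d}"]) (use True t in auto)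
          ultimately show ?thesis using True by (simp add: y_def u_def)
        next
          case False
          then have sd: "d < s" using sN by auto
          have "s - d \<notin> N2" using sN by (metis add_diff_cancel_left' image_eqI UnI2 diff_add_cancel add.commute)
          then have D: "(y2 has_vector_derivative f (y2 (s - d)) (u2 (s - d))) (at (s - d) within {0..t})"
            using s sd by (intro ND2) auto
          have D1: "((\<lambda>s. s - d) has_vector_derivative 1) (at s within {d..d+t})"
            by (auto intro!: derivative_eq_intros)
          have D2: "(y2 has_vector_derivative f (y2 (s - d)) (u2 (s - d))) (at ((\<lambda>s. s - d) s) within (\<lambda>s. s - d) ` {d..d+t})"
            using D by (rule has_vector_derivative_within_subset) auto
          from vector_diff_chain_within[OF D1 D2]
          have "((\<lambda>s. y2 (s - d)) has_vector_derivative f (y2 (s - d)) (u2 (s - d))) (at s within {d..d+t})"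
            by (simp add: o_def)
          then have "(y has_vector_derivative f (y2 (s - d)) (u2 (s - d))) (at s within {d..d+t})"
            by (rule has_vector_derivative_transform_within[where d=1]) (use s sd in \<open>auto simp: yd\<close>)
          moreover have "at s within {d..d+t} = at s within {0..d + t}"
            by (rule at_within_nhd[where S="{d<..}"]) (use sd d in auto)
          ultimately show ?thesis using sd by (simp add: y_def u_def)
        qed
      qed
    qed
    show "y 0 = x" using d y10 by (simp add: y_def)
    have "integrable (lebesgue_on {0..d}) (\<lambda>s. L (y s) (u s))"
    proof -
      have "integrable (lebesgue_on {0..d}) (\<lambda>s. L (y s) (u s)) = integrable (lebesgue_on {0..d}) (\<lambda>s. L (y1 s) (u1 s))"
        by (rule Bochner_Integration.integrable_cong) (auto simp: y_def u_def space_restrict_space)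
      then show ?thesis using int1 by simp
    qed
    then show "integrable (lebesgue_on {0..d + t}) (\<lambda>s. L (y s) (u s))"
      by (rule integrable_combine[OF _ intB]) (use d t in auto)
  qed
  have sp: "integral\<^sup>L (lebesgue_on {0..d+t}) (\<lambda>s. L (y s) (u s)) =
         integral\<^sup>L (lebesgue_on {0..d}) (\<lambda>s. L (y s) (u s)) +
         integral\<^sup>L (lebesgue_on {0..t}) (\<lambda>s. L (y (s + d)) (u (s + d)))"
    by (rule adm_split(3)[OF adm d t])
  have e1: "integral\<^sup>L (lebesgue_on {0..d}) (\<lambda>s. L (y s) (u s)) = integral\<^sup>L (lebesgue_on {0..d}) (\<lambda>s. L (y1 s) (u1 s))"
    by (rule Bochner_Integration.integral_cong) (auto simp: y_def u_def)
  have e2: "integral\<^sup>L (lebesgue_on {0..t}) (\<lambda>s. L (y (s + d)) (u (s + d))) = integral\<^sup>L (lebesgue_on {0..t}) (\<lambda>s. L (y2 s) (u2 s))"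
    by (rule int_spike(2)[OF int2, where c=0]) (auto simp: yd u_def)
  show "integral\<^sup>L (lebesgue_on {0..d+t}) (\<lambda>s. L (y s) (u s)) =
         integral\<^sup>L (lebesgue_on {0..d}) (\<lambda>s. L (y1 s) (u1 s)) +
         integral\<^sup>L (lebesgue_on {0..t}) (\<lambda>s. L (y2 s) (u2 s))"
    using sp e1 e2 by simp
  show "y (d + t) = y2 t" using yd[of "d + t"] t by simp
qed


lemma madd_ereal_ereal: "madd (ereal a) (madd (ereal b) c) = madd (ereal (a + b)) c"
  by (cases c) (auto simp: madd_def)

lemma dpp:
  assumes d: "0 \<le> d" and t: "0 \<le> t"
  shows "Sgrp X U f L d (Sgrp X U f L t g) x = Sgrp X U f L (d + t) g x"
proof (rule order.antisym)
  show "Sgrp X U f L d (Sgrp X U f L t g) x \<le> Sgrp X U f L (d + t) g x"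
    unfolding Sgrp_def[of X U f L d]
  proof (rule SUP_least, clarify)
    fix u1 y1 assume a1: "admissible X U f L d x u1 y1"
    show "madd (ereal (integral\<^sup>L (lebesgue_on {0..d}) (\<lambda>s. L (y1 s) (u1 s)))) (Sgrp X U f L t g (y1 d))
        \<le> Sgrp X U f L (d + t) g x"
      unfolding Sgrp_def[of X U f L t] madd_SUP
    proof (rule SUP_least, clarify)
      fix u2 y2 assume a2: "admissible X U f L t (y1 d) u2 y2"
      let ?u = "\<lambda>s. if s \<le> d then u1 s else u2 (s - d)"
      let ?y = "\<lambda>s. if s \<le> d then y1 s else y2 (s - d)"
      note C = adm_concat[OF a1 a2 d t]
      have "madd (ereal (integral\<^sup>L (lebesgue_on {0..d}) (\<lambda>s. L (y1 s) (u1 s))))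
             (madd (ereal (integral\<^sup>L (lebesgue_on {0..t}) (\<lambda>s. L (y2 s) (u2 s)))) (g (y2 t)))
          = madd (ereal (integral\<^sup>L (lebesgue_on {0..d}) (\<lambda>s. L (y1 s) (u1 s)) +
                 integral\<^sup>L (lebesgue_on {0..t}) (\<lambda>s. L (y2 s) (u2 s)))) (g (y2 t))"
        by (rule madd_ereal_ereal)
      also have "\<dots> = madd (ereal (integral\<^sup>L (lebesgue_on {0..d+t}) (\<lambda>s. L (?y s) (?u s)))) (g (?y (d + t)))"
        by (subst C(2), subst C(3), rule refl)
      also have "\<dots> \<le> Sgrp X U f L (d + t) g x"
        unfolding Sgrp_def using C(1) by (intro SUP_upper2[where i="(?u, ?y)"]) auto
      finally show "madd (ereal (integral\<^sup>L (lebesgue_on {0..d}) (\<lambda>s. L (y1 s) (u1 s))))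
             (madd (ereal (integral\<^sup>L (lebesgue_on {0..t}) (\<lambda>s. L (y2 s) (u2 s)))) (g (y2 t)))
          \<le> Sgrp X U f L (d + t) g x" .
    qed
  qed
  show "Sgrp X U f L (d + t) g x \<le> Sgrp X U f L d (Sgrp X U f L t g) x"
    unfolding Sgrp_def[of X U f L "d + t"]
  proof (rule SUP_least, clarify)
    fix u y assume a: "admissible X U f L (d + t) x u y"
    note S = adm_split[OF a d t]
    have "madd (ereal (integral\<^sup>L (lebesgue_on {0..d + t}) (\<lambda>s. L (y s) (u s)))) (g (y (d + t)))
        = madd (ereal (integral\<^sup>L (lebesgue_on {0..d}) (\<lambda>s. L (y s) (u s))))
            (madd (ereal (integral\<^sup>L (lebesgue_on {0..t}) (\<lambda>s. L (y (s + d)) (u (s + d))))) (g (y (t + d))))"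
      using S(3) by (simp add: madd_ereal_ereal add.commute)
    also have "\<dots> \<le> madd (ereal (integral\<^sup>L (lebesgue_on {0..d}) (\<lambda>s. L (y s) (u s)))) (Sgrp X U f L t g (y d))"
      unfolding Sgrp_def[of X U f L t] using S(2)
      by (intro madd_mono2 SUP_upper2[where i="(\<lambda>s. u (s + d), \<lambda>s. y (s + d))"]) auto
    also have "\<dots> \<le> Sgrp X U f L d (Sgrp X U f L t g) x"
      unfolding Sgrp_def[of X U f L d] using S(1) by (intro SUP_upper2[where i="(u, y)"]) auto
    finally show "madd (ereal (integral\<^sup>L (lebesgue_on {0..d + t}) (\<lambda>s. L (y s) (u s)))) (g (y (d + t)))
        \<le> Sgrp X U f L d (Sgrp X U f L t g) x" .
  qed
qed

lemma Sempty:
  assumes "U = {}" "0 \<le> t" shows "Sgrp X U f L t g x = -\<infinity>"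
proof -
  have "{(u, traj). admissible X U f L t x u traj} = {}" using assms by (auto simp: admissible_def)
  then show ?thesis unfolding Sgrp_def by (simp only: image_empty Sup_empty bot_ereal_def)
qed

lemma madd_zero: "madd (ereal 0) a = a"
  by (cases a) (auto simp: madd_def)

lemma S0:
  assumes U: "U \<noteq> {}" and x: "x \<in> X"
  shows "Sgrp X U f L 0 g x = g x"
proof -
  obtain u0 where u0: "u0 \<in> U" using U by auto
  have ac: "abs_cont_on 0 0 (\<lambda>s. x)" unfolding abs_cont_on_def by (auto intro: exI[of _ 1])
  have int0: "integral\<^sup>L (lebesgue_on {0..0::real}) h = 0" for h :: "real \<Rightarrow> real"
  proof -
    have "{0..0::real} \<in> null_sets lebesgue" using negligible_iff_null_sets[of "{0::real}"] by auto
    then show ?thesis by (rule integral_eq_zero_null_sets)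
  qed
  have int0': "integral\<^sup>L (lebesgue_on {0::real}) h = 0" for h :: "real \<Rightarrow> real"
    using int0[of h] by simp
  have adm: "admissible X U f L 0 x (\<lambda>s. u0) (\<lambda>s. x)"
    unfolding admissible_def
  proof (intro conjI)
    show "AE s in lebesgue_on {0..0::real}. ((\<lambda>s. x) has_vector_derivative f x u0) (at s within {0..0})"
      by (subst AE_lebesgue_on_iff) (auto intro!: exI[of _ "{0}"])
    show "integrable (lebesgue_on {0..0::real}) (\<lambda>s. L x u0)"
      by (rule Lebesgue_Measure.integrable_const_ivl)
  qed (use u0 x ac in auto)
  have all: "(\<lambda>(u, traj). madd (ereal (integral\<^sup>L (lebesgue_on {0..0}) (\<lambda>s. L (traj s) (u s)))) (g (traj 0))) p = g x"
    if "p \<in> {(u, traj). admissible X U f L 0 x u traj}" for p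
    using that by (auto simp: int0 int0' admissible_def madd_zero)
  have ne: "{(u, traj). admissible X U f L 0 x u traj} \<noteq> {}" using adm by auto
  show ?thesis unfolding Sgrp_def
    by (subst SUP_cong[OF refl all]) (use ne in auto)
qed

lemma supdist_nonneg: "0 \<le> supdist X u v"
  unfolding supdist_def by (rule Inf_greatest) auto

lemma matdist_nonneg: "0 \<le> matdist q p A B"
  unfolding matdist_eq by (rule supdist_nonneg)

theorem lemma5p4:
  fixes X :: "(real ^ 'n) set" and U :: "(real ^ 'm) set"
    and L :: "real ^ 'n \<Rightarrow> real ^ 'm \<Rightarrow> real"
    and f :: "real ^ 'n \<Rightarrow> real ^ 'm \<Rightarrow> real ^ 'n"
    and T :: real and N :: nat and \<phi> :: "real ^ 'n \<Rightarrow> ereal"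
    and p q :: nat and w z :: "nat \<Rightarrow> real ^ 'n \<Rightarrow> ereal"
    and Kt :: "nat \<Rightarrow> nat \<Rightarrow> ereal"
  assumes "T > 0" and "N \<ge> 1" and "p \<ge> 1" and "q \<ge> 1"
    and "\<forall>x\<in>X. \<phi> x \<noteq> \<infinity>"
    and "\<forall>i<p. \<forall>x\<in>X. w i x \<noteq> \<infinity>"
    and "\<forall>j<q. \<forall>x\<in>X. z j x \<noteq> \<infinity>"
  defines "\<delta> \<equiv> T / real N"
  defines "v \<equiv> (\<lambda>t. Sgrp X U f L t \<phi>)"
  defines "K \<equiv> (\<lambda>j i. pairing X (z j) (Sgrp X U f L \<delta> (w i)))"
  defines "vhT \<equiv> Wop p w (fem_coeffs X p q w z Kt \<phi> N)"
  shows "supdist X vhT (v T) \<le>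
           ereal (1 + T / \<delta>) *
           ((SUP k\<in>{0..N}. supdist X (PZ X q z (v (real k * \<delta>))) (v (real k * \<delta>))
                          + supdist X (PW X p w (v (real k * \<delta>))) (v (real k * \<delta>)))
            + matdist q p Kt K)"
proof -
  have Npos: "real N > 0" using assms(2) by simp
  have dpos: "\<delta> > 0" unfolding \<delta>_def using assms(1) Npos by simp
  have TN: "T / \<delta> = real N" unfolding \<delta>_def using assms(1) Npos by simp
  have vT: "v T = v (real N * \<delta>)" unfolding \<delta>_def using Npos by simp
  define vv where "vv k = v (real k * \<delta>)" for k
  define gg where "gg k = Wop p w (fem_coeffs X p q w z Kt \<phi> k)" for k
  define a where "a k = supdist X (PZ X q z (vv k)) (vv k)" for k
  define b where "b k = supdist X (PW X p w (vv k)) (vv k)" for k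
  define Sm where "Sm = (SUP k\<in>{0..N}. a k + b k)"
  define m where "m = matdist q p Kt K"
  have goal_eq: "?thesis \<longleftrightarrow> supdist X (gg N) (vv N) \<le> ereal (1 + real N) * (Sm + m)"
    unfolding TN vhT_def gg_def vv_def vT Sm_def a_def b_def m_def by simp
  show ?thesis
  proof (cases "Sm + m = \<infinity>")
    case True
    have eq: "ereal (1 + real N) * (Sm + m) = \<infinity>" unfolding True using Npos by simp
    show ?thesis unfolding goal_eq eq by simp
  next
    case False
    have a0: "0 \<le> a k" "0 \<le> b k" for k unfolding a_def b_def by (auto intro: supdist_nonneg)
    have m0: "0 \<le> m" unfolding m_def by (rule matdist_nonneg)
    have abS: "a k + b k \<le> Sm" if "k \<le> N" for k unfolding Sm_def using that by (intro SUP_upper) auto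
    have S0': "0 \<le> Sm" using abS[of 0] a0[of 0] by (meson add_nonneg_nonneg order.trans zero_le)
    have "Sm \<noteq> \<infinity>" "m \<noteq> \<infinity>" using False S0' m0 by auto
    then obtain sr mr where sr: "Sm = ereal sr" and mr: "m = ereal mr"
      using S0' m0 by (cases Sm; cases m) auto
    have sr0: "0 \<le> sr" and mr0: "0 \<le> mr" using S0' m0 sr mr by auto
    have projs: "close X sr (PW X p w (PZ X q z (vv k))) (vv k) \<and> close X sr (PW X p w (vv k)) (vv k)"
      if "k \<le> N" for k
    proof -
      have le: "a k + b k \<le> ereal sr" using abS[OF that] sr by simp
      then have "a k \<noteq> \<infinity>" "b k \<noteq> \<infinity>" using a0[of k] by auto
      then obtain ak bk where ak: "a k = ereal ak" and bk: "b k = ereal bk"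
        using a0[of k] by (cases "a k"; cases "b k") auto
      have akb: "ak + bk \<le> sr" "0 \<le> ak" "0 \<le> bk" using le ak bk a0[of k] by auto
      have c1: "close X ak (PZ X q z (vv k)) (vv k)" using ak unfolding a_def by (rule close_of_supdist)
      have c2: "close X bk (PW X p w (vv k)) (vv k)" using bk unfolding b_def by (rule close_of_supdist)
      have "close X (ak + bk) (PW X p w (PZ X q z (vv k))) (vv k)"
        by (rule close_trans[OF PW_nonexp[OF c1] c2])
      then show ?thesis using c2 akb by (auto elim: close_mono)
    qed
    have DPP: "Sgrp X U f L \<delta> (vv k) x = vv (Suc k) x" for k x
    proof -
      have "real (Suc k) * \<delta> = \<delta> + real k * \<delta>" by (simp add: algebra_simps)
      then show ?thesis unfolding vv_def v_def using dpos by (simp add: dpp)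
    qed
    have kt: "K j i + ereal (-mr) \<le> Kt j i \<and> Kt j i \<le> K j i + ereal mr" if "j < q" "i < p" for j i
      using close_of_matdist[OF mr[unfolded m_def] that] .
    have step: "close X (mr + d + sr) (gg (Suc k)) (vv (Suc k))"
      if k: "k < N" and cd: "close X d (Sgrp X U f L \<delta> (gg k)) (Sgrp X U f L \<delta> (vv k))" for k d
    proof -
      let ?M = "\<lambda>j i. pairing X (z j) (w i)"
      let ?l = "fem_coeffs X p q w z Kt \<phi> k"
      have g1: "gg (Suc k) = Wop p w (mp_resid q ?M (mp_mult p Kt ?l))" unfolding gg_def by simp
      have c1: "close X mr (gg (Suc k)) (Wop p w (mp_resid q ?M (mp_mult p K ?l)))"
        unfolding g1 by (intro Wop_nonexp mp_resid_nonexp mp_mult_pert kt)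
      have ki: "Wop p w (mp_resid q ?M (mp_mult p K ?l)) = PW X p w (PZ X q z (Sgrp X U f L \<delta> (gg k)))"
        unfolding K_def gg_def by (rule key_identity)
      have c2: "close X d (PW X p w (PZ X q z (Sgrp X U f L \<delta> (gg k))))
                   (PW X p w (PZ X q z (Sgrp X U f L \<delta> (vv k))))"
        by (intro PW_nonexp PZ_nonexp cd)
      have c3: "close X 0 (PW X p w (PZ X q z (Sgrp X U f L \<delta> (vv k))))
                   (PW X p w (PZ X q z (vv (Suc k))))"
        by (intro PW_nonexp PZ_nonexp close_eq) (simp add: DPP)
      have c4: "close X sr (PW X p w (PZ X q z (vv (Suc k)))) (vv (Suc k))"
        using projs[of "Suc k"] k by simp
      show ?thesis using close_trans[OF close_trans[OF close_trans[OF c1[unfolded ki] c2] c3] c4] by simp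
    qed
    have base: "close X sr (Sgrp X U f L \<delta> (gg 0)) (Sgrp X U f L \<delta> (vv 0))"
    proof (cases "U = {}")
      case True
      then show ?thesis using dpos by (simp add: close_def Sempty)
    next
      case False
      have "Wres X w \<phi> = Wres X w (vv 0)" unfolding Wres_def vv_def v_def
        using False by (auto intro!: INF_cong simp: S0)
      then have "gg 0 = PW X p w (vv 0)" unfolding gg_def PW_def by simp
      then show ?thesis using projs[of 0] dpos by (auto intro: Sgrp_nonexp)
    qed
    have ind: "close X (real k * mr + real (k+1) * sr) (gg k) (vv k)" if "1 \<le> k" "k \<le> N" for k
      using that
    proof (induction k)
      case 0 then show ?case by simp
    next
      case (Suc k)
      show ?case
      proof (cases "k = 0")
        case True
        then show ?thesis using step[OF _ base] Suc.prems by (simp add: algebra_simps)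
      next
        case False
        then have "close X (real k * mr + real (k+1) * sr) (gg k) (vv k)" using Suc by simp
        then have "close X (real k * mr + real (k+1) * sr) (Sgrp X U f L \<delta> (gg k)) (Sgrp X U f L \<delta> (vv k))"
          using dpos by (intro Sgrp_nonexp) auto
        from step[OF _ this] Suc.prems show ?thesis by (simp add: algebra_simps)
      qed
    qed
    have "supdist X (gg N) (vv N) \<le> ereal (real N * mr + real (N+1) * sr)"
      using ind[of N] assms(2) sr0 mr0 by (intro supdist_le) auto
    also have "\<dots> \<le> ereal (1 + real N) * (Sm + m)"
      unfolding sr mr using sr0 mr0 by (simp add: algebra_simps)
    finally show ?thesis unfolding goal_eq .
  qed
qed

end
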